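(* Let $n\ge 2$, let $\Omega$ be a compact subset of $\mathbb{R}^n$, and for $\delta>0$ let $\Omega_\delta=\{x+\delta u : x\in\Omega,\ u\in B^n\}=\bigcup_{x\in\Omega}B_\delta(x)$. Then $\mathit{Uf}(\Omega_\delta)\subset \mathit{Uf}(\Omega)$ for every $\delta>0$. Moreover, if $\Omega$ is convex, then $\mathit{Uf}(\Omega_\delta)=\mathit{Uf}(\Omega)$ for every $\delta>0$.
   Context: $B^n$ is the closed unit ball in $\mathbb{R}^n$ and $B_\delta(x)$ the closed ball with center $x$ and radius $\delta$; $S^{n-1}$ is the unit sphere. For $X\subset\mathbb{R}^n$, $v\in S^{n-1}$ and $b\in\mathbb{R}$, put $X^+_{v,b}=X\cap\{x\in\mathbb{R}^n : x\cdot v>b\}$, and let $\mathrm{R}_{v,b}$ be the reflection of $\mathbb{R}^n$ in the hyperplane $\{x : x\cdot v=b\}$. For a bounded $X\subset\mathbb{R}^n$, define $l_X(v)=\inf\{a : \mathrm{R}_{v,c}(X^+_{v,c})\subset X \text{ for every } c\ge a\}$ and the minimal unfolded region $\mathit{Uf}(X)=\bigcap_{v\in S^{n-1}}\{x\in\mathbb{R}^n : x\cdot v\le l_X(v)\}$. *)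

theory Defs
  imports "HOL-Analysis.Analysis"
begin

definition upper_part :: "'a::euclidean_space set \<Rightarrow> 'a \<Rightarrow> real \<Rightarrow> 'a set" where
  "upper_part X v b = X \<inter> {x. x \<bullet> v > b}"

definition refl_hyp :: "'a::euclidean_space \<Rightarrow> real \<Rightarrow> 'a \<Rightarrow> 'a" where
  "refl_hyp v b x = x - (2 * (x \<bullet> v - b)) *\<^sub>R v"

definition l_fun :: "'a::euclidean_space set \<Rightarrow> 'a \<Rightarrow> real" where
  "l_fun X v = Inf {a. \<forall>c\<ge>a. refl_hyp v c ` upper_part X v c \<subseteq> X}"

definition Uf :: "'a::euclidean_space set \<Rightarrow> 'a set" where
  "Uf X = (\<Inter>v\<in>sphere 0 1. {x. x \<bullet> v \<le> l_fun X v})"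

definition thicken :: "'a::euclidean_space set \<Rightarrow> real \<Rightarrow> 'a set" where
  "thicken \<Omega> \<delta> = {x + \<delta> *\<^sub>R u | x u. x \<in> \<Omega> \<and> u \<in> cball 0 1}"

end

theory Submission
  imports Defs
begin

lemma vv1: "norm (v::'a::euclidean_space) = 1 \<Longrightarrow> v \<bullet> v = 1"
  by (simp add: norm_eq_1)

lemma refl_norm:
  fixes u v :: "'a::euclidean_space"
  assumes "norm v = 1"
  shows "norm (u - (2 * (u \<bullet> v)) *\<^sub>R v) = norm u"
proof -
  have vv: "v \<bullet> v = 1" using assms by (rule vv1)
  have "(norm (u - (2 * (u \<bullet> v)) *\<^sub>R v))^2 = (norm u)^2"
    by (simp add: power2_norm_eq_inner inner_diff_left inner_diff_right vv algebra_simps inner_commute)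
  then show ?thesis by (simp add: power2_eq_iff_nonneg)
qed

lemma refl_add:
  fixes u v x :: "'a::euclidean_space"
  shows "refl_hyp v c (x + d *\<^sub>R u) = refl_hyp v c x + d *\<^sub>R (u - (2 * (u \<bullet> v)) *\<^sub>R v)"
  by (simp add: refl_hyp_def algebra_simps inner_add_left)

lemma thick_good:
  fixes \<Omega> :: "'a::euclidean_space set"
  assumes v: "norm v = 1" and d: "\<delta> > 0"
    and S: "refl_hyp v c ` upper_part \<Omega> v c \<subseteq> \<Omega>"
  shows "refl_hyp v c ` upper_part (thicken \<Omega> \<delta>) v c \<subseteq> thicken \<Omega> \<delta>"
proof
  have vv: "v \<bullet> v = 1" using v by (rule vv1)
  fix z assume "z \<in> refl_hyp v c ` upper_part (thicken \<Omega> \<delta>) v c"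
  then obtain x u where x: "x\<in>\<Omega>" and u: "norm u \<le> 1" and yv: "(x + \<delta> *\<^sub>R u) \<bullet> v > c"
      and z: "z = refl_hyp v c (x + \<delta> *\<^sub>R u)"
    by (auto simp: upper_part_def thicken_def)
  show "z \<in> thicken \<Omega> \<delta>"
  proof (cases "x \<bullet> v > c")
    case True
    hence "refl_hyp v c x \<in> \<Omega>" using S x by (auto simp: upper_part_def)
    moreover have "z = refl_hyp v c x + \<delta> *\<^sub>R (u - (2*(u \<bullet> v)) *\<^sub>R v)"
      using z by (simp add: refl_add)
    moreover have "norm (u - (2*(u \<bullet> v)) *\<^sub>R v) \<le> 1" using refl_norm[OF v] u by simp
    ultimately show ?thesis unfolding thicken_def by (auto simp: mem_cball_0)
  next
    case False
    define y where "y = x + \<delta> *\<^sub>R u"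
    have eq: "(norm (z - x))^2 = (norm (y - x))^2 - 4 * (y \<bullet> v - c) * (c - x \<bullet> v)"
      unfolding z y_def[symmetric]
      by (simp add: refl_hyp_def power2_norm_eq_inner inner_diff_left inner_diff_right vv
            algebra_simps inner_commute)
    have "0 \<le> 4 * (y \<bullet> v - c) * (c - x \<bullet> v)" using False yv unfolding y_def by simp
    hence "(norm (z - x))^2 \<le> (norm (y - x))^2" using eq by linarith
    hence "norm (z - x) \<le> norm (y - x)" by (simp add: power2_le_iff_abs_le)
    also have "norm (y - x) \<le> \<delta>" using u d unfolding y_def
      by (simp add: mult_left_le)
    finally have nz: "norm (z - x) \<le> \<delta>" .
    define u' where "u' = (1/\<delta>) *\<^sub>R (z - x)"
    have "z = x + \<delta> *\<^sub>R u'" using d unfolding u'_def by simp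
    moreover have "norm u' \<le> 1" using nz d unfolding u'_def by (simp add: divide_le_eq_1)
    ultimately show ?thesis using x unfolding thicken_def by (auto simp: mem_cball_0)
  qed
qed

lemma convex_good:
  fixes \<Omega> :: "'a::euclidean_space set"
  assumes v: "norm v = 1" and d: "\<delta> > 0" and cv: "convex \<Omega>" "closed \<Omega>"
    and S: "refl_hyp v c ` upper_part (thicken \<Omega> \<delta>) v c \<subseteq> thicken \<Omega> \<delta>"
  shows "refl_hyp v c ` upper_part \<Omega> v c \<subseteq> \<Omega>"
proof
  have vv: "v \<bullet> v = 1" using v by (rule vv1)
  fix z assume "z \<in> refl_hyp v c ` upper_part \<Omega> v c"
  then obtain x where x: "x \<in> \<Omega>" "x \<bullet> v > c" and z: "z = refl_hyp v c x"
    by (auto simp: upper_part_def)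
  show "z \<in> \<Omega>"
  proof (rule ccontr)
    assume "z \<notin> \<Omega>"
    then obtain a b where ab: "a \<bullet> z < b" "\<forall>y\<in>\<Omega>. a \<bullet> y > b"
      using separating_hyperplane_closed_point[OF cv] by blast
    have "a \<noteq> 0" using ab x by auto
    define w where "w = (- 1 / norm a) *\<^sub>R a"
    have nw: "norm w = 1" using \<open>a \<noteq> 0\<close> unfolding w_def by simp
    have wy: "w \<bullet> y < w \<bullet> z" if "y \<in> \<Omega>" for y
    proof -
      have "a \<bullet> z < a \<bullet> y" using ab that by force
      then show ?thesis using \<open>a \<noteq> 0\<close> unfolding w_def by (simp add: divide_simps)
    qed
    have "w \<bullet> z - w \<bullet> x = - 2 * (x \<bullet> v - c) * (w \<bullet> v)"
      unfolding z by (simp add: refl_hyp_def inner_diff_right algebra_simps)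
    moreover have "w \<bullet> z - w \<bullet> x > 0" using wy[OF x(1)] by simp
    ultimately have "(x \<bullet> v - c) * (w \<bullet> v) < 0" by linarith
    then have wv: "w \<bullet> v < 0" using x(2) by (simp add: mult_less_0_iff)
    define q where "q = z + \<delta> *\<^sub>R w"
    have qn: "q \<notin> thicken \<Omega> \<delta>"
    proof
      assume "q \<in> thicken \<Omega> \<delta>"
      then obtain y u where y: "y \<in> \<Omega>" and u: "norm u \<le> 1" and qy: "q = y + \<delta> *\<^sub>R u"
        unfolding thicken_def by (auto simp: mem_cball_0)
      have "w \<bullet> u \<le> 1" using norm_cauchy_schwarz[of w u] nw u by simp
      hence "\<delta> * (w \<bullet> u) \<le> \<delta>" using d by (simp add: mult_left_le)
      moreover have "w \<bullet> q = w \<bullet> y + \<delta> * (w \<bullet> u)" using qy by (simp add: inner_add_right)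
      moreover have "w \<bullet> q = w \<bullet> z + \<delta>" using nw unfolding q_def
        by (simp add: inner_add_right norm_eq_1)
      ultimately show False using wy[OF y] by linarith
    qed
    define y' where "y' = x + \<delta> *\<^sub>R (w - (2 * (w \<bullet> v)) *\<^sub>R v)"
    have "norm (w - (2 * (w \<bullet> v)) *\<^sub>R v) \<le> 1" using refl_norm[OF v] nw by simp
    hence y'in: "y' \<in> thicken \<Omega> \<delta>" using x unfolding thicken_def y'_def by (auto simp: mem_cball_0)
    have "y' \<bullet> v = x \<bullet> v - \<delta> * (w \<bullet> v)" unfolding y'_def
      by (simp add: inner_add_left inner_diff_left vv algebra_simps)
    moreover have "\<delta> * (w \<bullet> v) < 0" using d wv by (simp add: mult_pos_neg)
    ultimately have "y' \<bullet> v > c" using x(2) by linarith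
    hence "refl_hyp v c y' \<in> thicken \<Omega> \<delta>" using S y'in by (auto simp: upper_part_def)
    moreover have "refl_hyp v c y' = q" unfolding y'_def q_def z refl_add
      by (simp add: inner_diff_left vv algebra_simps)
    ultimately show False using qn by simp
  qed
qed

lemma A_nonempty:
  fixes X :: "'a::euclidean_space set"
  assumes "bounded X" "norm v = 1"
  shows "{a. \<forall>c\<ge>a. refl_hyp v c ` upper_part X v c \<subseteq> X} \<noteq> {}"
proof -
  obtain r where r: "\<forall>x\<in>X. norm x \<le> r" using assms(1) bounded_iff by blast
  have "upper_part X v c = {}" if "c \<ge> r" for c
  proof -
    have "x \<bullet> v \<le> r" if "x \<in> X" for x
      using norm_cauchy_schwarz[of x v] assms(2) r[rule_format, OF that] by simp
    then show ?thesis using that unfolding upper_part_def by force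
  qed
  then have "r \<in> {a. \<forall>c\<ge>a. refl_hyp v c ` upper_part X v c \<subseteq> X}" by auto
  then show ?thesis by blast
qed

lemma A_bdd:
  fixes X :: "'a::euclidean_space set"
  assumes "bounded X" "X \<noteq> {}" "norm v = 1"
  shows "bdd_below {a. \<forall>c\<ge>a. refl_hyp v c ` upper_part X v c \<subseteq> X}"
proof -
  have vv: "v \<bullet> v = 1" using assms(3) by (rule vv1)
  obtain r where r: "\<forall>x\<in>X. norm x \<le> r" using assms(1) bounded_iff by blast
  have ab: "\<bar>x \<bullet> v\<bar> \<le> r" if "x \<in> X" for x
    using Cauchy_Schwarz_ineq2[of x v] assms(3) r[rule_format, OF that] by simp
  obtain x0 where x0: "x0 \<in> X" using assms(2) by blast
  show ?thesis unfolding bdd_below_def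
  proof (intro exI ballI)
    fix a assume "a \<in> {a. \<forall>c\<ge>a. refl_hyp v c ` upper_part X v c \<subseteq> X}"
    then have S: "refl_hyp v a ` upper_part X v a \<subseteq> X" by auto
    show "- r \<le> a"
    proof (rule ccontr)
      assume "\<not> - r \<le> a"
      hence "x0 \<bullet> v > a" using ab[OF x0] by linarith
      hence "refl_hyp v a x0 \<in> X" using S x0 by (auto simp: upper_part_def)
      moreover have "refl_hyp v a x0 \<bullet> v = 2 * a - x0 \<bullet> v"
        by (simp add: refl_hyp_def inner_diff_left vv algebra_simps)
      ultimately show False using ab[OF x0] ab[of "refl_hyp v a x0"] \<open>\<not> - r \<le> a\<close> by force
    qed
  qed
qed

theorem theorem3p1:
  fixes \<Omega> :: "'a::euclidean_space set"
  assumes "DIM('a) \<ge> 2" and "compact \<Omega>"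
  shows "(\<forall>\<delta>>0. Uf (thicken \<Omega> \<delta>) \<subseteq> Uf \<Omega>)
         \<and> (convex \<Omega> \<longrightarrow> (\<forall>\<delta>>0. Uf (thicken \<Omega> \<delta>) = Uf \<Omega>))"
proof (intro conjI allI impI)
  fix \<delta> :: real assume d: "\<delta> > 0"
  show "Uf (thicken \<Omega> \<delta>) \<subseteq> Uf \<Omega>"
  proof (cases "\<Omega> = {}")
    case True
    then show ?thesis by (simp add: thicken_def)
  next
    case False
    have bO: "bounded \<Omega>" using assms(2) compact_imp_bounded by blast
    obtain r where r: "\<forall>x\<in>\<Omega>. norm x \<le> r" using bO bounded_iff by blast
    have bT: "bounded (thicken \<Omega> \<delta>)" unfolding bounded_iff
    proof (intro exI ballI)
      fix y assume "y \<in> thicken \<Omega> \<delta>"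
      then obtain x u where "x \<in> \<Omega>" "norm u \<le> 1" "y = x + \<delta> *\<^sub>R u"
        unfolding thicken_def by (auto simp: mem_cball_0)
      then show "norm y \<le> r + \<delta>" using r d norm_triangle_ineq[of x "\<delta> *\<^sub>R u"]
        by (smt (verit) mult_left_le norm_scaleR)
    qed
    obtain x0 where x0: "x0 \<in> \<Omega>" using False by blast
    have "x0 = x0 + \<delta> *\<^sub>R (0::'a) \<and> x0 \<in> \<Omega> \<and> (0::'a) \<in> cball 0 1" using x0 by simp
    then have "x0 \<in> thicken \<Omega> \<delta>" unfolding thicken_def mem_Collect_eq by blast
    then have nT: "thicken \<Omega> \<delta> \<noteq> {}" by blast
    have "l_fun (thicken \<Omega> \<delta>) v \<le> l_fun \<Omega> v" if v: "v \<in> sphere 0 1" for v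
    proof -
      have nv: "norm v = 1" using v by simp
      have sub: "{a. \<forall>c\<ge>a. refl_hyp v c ` upper_part \<Omega> v c \<subseteq> \<Omega>}
          \<subseteq> {a. \<forall>c\<ge>a. refl_hyp v c ` upper_part (thicken \<Omega> \<delta>) v c \<subseteq> thicken \<Omega> \<delta>}"
      proof
        fix a assume a: "a \<in> {a. \<forall>c\<ge>a. refl_hyp v c ` upper_part \<Omega> v c \<subseteq> \<Omega>}"
        have H: "refl_hyp v c ` upper_part (thicken \<Omega> \<delta>) v c \<subseteq> thicken \<Omega> \<delta>" if ac: "a \<le> c" for c
        proof (rule thick_good[OF nv d])
          from a have "\<forall>c\<ge>a. refl_hyp v c ` upper_part \<Omega> v c \<subseteq> \<Omega>" by (simp only: mem_Collect_eq)
          then have "a \<le> c \<longrightarrow> refl_hyp v c ` upper_part \<Omega> v c \<subseteq> \<Omega>" by (rule spec)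
          then show "refl_hyp v c ` upper_part \<Omega> v c \<subseteq> \<Omega>" using ac by (rule mp)
        qed
        show "a \<in> {a. \<forall>c\<ge>a. refl_hyp v c ` upper_part (thicken \<Omega> \<delta>) v c \<subseteq> thicken \<Omega> \<delta>}"
          unfolding mem_Collect_eq by (intro allI impI) (erule H)
      qed
      show ?thesis unfolding l_fun_def
        by (rule cInf_superset_mono[OF A_nonempty[OF bO nv] A_bdd[OF bT nT nv] sub])
    qed
    then show ?thesis unfolding Uf_def by force
  qed
next
  fix \<delta> :: real assume cv: "convex \<Omega>" and d: "\<delta> > 0"
  have cl: "closed \<Omega>" using assms(2) compact_imp_closed by blast
  have "l_fun (thicken \<Omega> \<delta>) v = l_fun \<Omega> v" if v: "v \<in> sphere 0 1" for v
  proof -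
    have nv: "norm v = 1" using v by simp
    have "{a. \<forall>c\<ge>a. refl_hyp v c ` upper_part (thicken \<Omega> \<delta>) v c \<subseteq> thicken \<Omega> \<delta>}
        = {a. \<forall>c\<ge>a. refl_hyp v c ` upper_part \<Omega> v c \<subseteq> \<Omega>}"
    proof (rule set_eqI, unfold mem_Collect_eq, rule iffI)
      fix a assume H: "\<forall>c\<ge>a. refl_hyp v c ` upper_part (thicken \<Omega> \<delta>) v c \<subseteq> thicken \<Omega> \<delta>"
      show "\<forall>c\<ge>a. refl_hyp v c ` upper_part \<Omega> v c \<subseteq> \<Omega>"
      proof (intro allI impI)
        fix c assume ac: "a \<le> c"
        from H have "a \<le> c \<longrightarrow> refl_hyp v c ` upper_part (thicken \<Omega> \<delta>) v c \<subseteq> thicken \<Omega> \<delta>" by (rule spec)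
        then have "refl_hyp v c ` upper_part (thicken \<Omega> \<delta>) v c \<subseteq> thicken \<Omega> \<delta>" using ac by (rule mp)
        then show "refl_hyp v c ` upper_part \<Omega> v c \<subseteq> \<Omega>" by (rule convex_good[OF nv d cv cl])
      qed
    next
      fix a assume H: "\<forall>c\<ge>a. refl_hyp v c ` upper_part \<Omega> v c \<subseteq> \<Omega>"
      show "\<forall>c\<ge>a. refl_hyp v c ` upper_part (thicken \<Omega> \<delta>) v c \<subseteq> thicken \<Omega> \<delta>"
      proof (intro allI impI)
        fix c assume ac: "a \<le> c"
        from H have "a \<le> c \<longrightarrow> refl_hyp v c ` upper_part \<Omega> v c \<subseteq> \<Omega>" by (rule spec)
        then have "refl_hyp v c ` upper_part \<Omega> v c \<subseteq> \<Omega>" using ac by (rule mp)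
        then show "refl_hyp v c ` upper_part (thicken \<Omega> \<delta>) v c \<subseteq> thicken \<Omega> \<delta>" by (rule thick_good[OF nv d])
      qed
    qed
    then show ?thesis unfolding l_fun_def by simp
  qed
  then show "Uf (thicken \<Omega> \<delta>) = Uf \<Omega>" unfolding Uf_def by force
qed

end
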